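(* Let $G=(V,E)$ be a graph and $X\in\{0,1\}^V$ any marking vector, and let $I_X$ be the independent set returned by FIND-IS on $X$. Then $H(I_X)\ge S(X)/2$.
   Context: Identify $V$ with $[n]$ so that $d(u)\le d(v)$ whenever $u<v$, where $d(v)$ is the degree of $v$ and $N(v)$ its neighborhood. FIND-IS on marking vector $X$: vertices $v$ with $X(v)=1$ are marked; for every edge with both endpoints marked, the endpoint with smaller index (lower degree, ties broken by index) is unmarked; $I_X$ is the set of vertices remaining marked, i.e. $I_X=\{w: X(w)=1$ and no neighbor $u>w$ has $X(u)=1\}$. For an independent set $I$, $H(I)$ is the number of edges of $G$ having at least one endpoint in $I\cup N(I)$ (the edges deleted when forming the residual graph). For each vertex $v$ let $G(v)=\sum_{w\in N(v)}1/d(w)$ and $a_v=\min(1,1/G(v))$. Define $$S(v,X)=a_v\sum_{w\in N(v)}X(w)-a_v^2\sum_{\substack{w<w'\\ w,w'\in N(v)}}X(w)X(w')-a_v\sum_{w\in N(v)}\ \sum_{\substack{u:\,(w,u)\in E\\ w<u}}X(w)X(u),$$ and $S(X)=\sum_v d(v)S(v,X)$. *)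

theory Defs
  imports Complex_Main
begin

definition simple_graph :: "nat \<Rightarrow> (nat \<Rightarrow> nat \<Rightarrow> bool) \<Rightarrow> bool" where
  "simple_graph n E \<longleftrightarrow> (\<forall>u v. E u v \<longrightarrow> u < n \<and> v < n \<and> u \<noteq> v \<and> E v u)"

definition nbhd :: "nat \<Rightarrow> (nat \<Rightarrow> nat \<Rightarrow> bool) \<Rightarrow> nat \<Rightarrow> nat set" where
  "nbhd n E v = {w. w < n \<and> E v w}"

definition deg :: "nat \<Rightarrow> (nat \<Rightarrow> nat \<Rightarrow> bool) \<Rightarrow> nat \<Rightarrow> nat" where
  "deg n E v = card (nbhd n E v)"

definition find_is :: "nat \<Rightarrow> (nat \<Rightarrow> nat \<Rightarrow> bool) \<Rightarrow> (nat \<Rightarrow> bool) \<Rightarrow> nat set" where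
  "find_is n E X = {w. w < n \<and> X w \<and> (\<forall>u. E w u \<and> w < u \<longrightarrow> \<not> X u)}"

definition H :: "nat \<Rightarrow> (nat \<Rightarrow> nat \<Rightarrow> bool) \<Rightarrow> nat set \<Rightarrow> nat" where
  "H n E I = (let C = I \<union> {v. v < n \<and> (\<exists>w\<in>I. E w v)} in
     card {(u, v). u < v \<and> v < n \<and> E u v \<and> (u \<in> C \<or> v \<in> C)})"

definition Gsum :: "nat \<Rightarrow> (nat \<Rightarrow> nat \<Rightarrow> bool) \<Rightarrow> nat \<Rightarrow> real" where
  "Gsum n E v = (\<Sum>w\<in>nbhd n E v. 1 / real (deg n E w))"

definition acoef :: "nat \<Rightarrow> (nat \<Rightarrow> nat \<Rightarrow> bool) \<Rightarrow> nat \<Rightarrow> real" where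
  "acoef n E v = min 1 (1 / Gsum n E v)"

definition Sv :: "nat \<Rightarrow> (nat \<Rightarrow> nat \<Rightarrow> bool) \<Rightarrow> nat \<Rightarrow> (nat \<Rightarrow> bool) \<Rightarrow> real" where
  "Sv n E v X =
     acoef n E v * (\<Sum>w\<in>nbhd n E v. of_bool (X w))
   - (acoef n E v)^2 * (\<Sum>(w, w')\<in>{(w, w'). w \<in> nbhd n E v \<and> w' \<in> nbhd n E v \<and> w < w'}.
                          of_bool (X w) * of_bool (X w'))
   - acoef n E v * (\<Sum>w\<in>nbhd n E v. \<Sum>u\<in>{u. u < n \<and> E w u \<and> w < u}.
                          of_bool (X w) * of_bool (X u))"

definition Stot :: "nat \<Rightarrow> (nat \<Rightarrow> nat \<Rightarrow> bool) \<Rightarrow> (nat \<Rightarrow> bool) \<Rightarrow> real" where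
  "Stot n E X = (\<Sum>v<n. real (deg n E v) * Sv n E v X)"

end

theory Submission
  imports Defs
begin

lemma pair_count:
  fixes K :: "nat set"
  assumes "finite K"
  shows "2 * card {(w, w'). w \<in> K \<and> w' \<in> K \<and> w < w'} + card K = card K ^ 2"
proof -
  let ?L = "{(w, w'). w \<in> K \<and> w' \<in> K \<and> w < w'}"
  let ?R = "{(w, w'). w \<in> K \<and> w' \<in> K \<and> w' < w}"
  let ?D = "(\<lambda>x. (x, x)) ` K"
  have fL: "finite ?L" by (rule finite_subset[of _ "K \<times> K"]) (use assms in auto)
  have fR: "finite ?R" by (rule finite_subset[of _ "K \<times> K"]) (use assms in auto)
  have fD: "finite ?D" using assms by simp
  have eq: "K \<times> K = (?L \<union> ?R) \<union> ?D" by auto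
  have R: "?R = (\<lambda>(a, b). (b, a)) ` ?L" by auto
  have cR: "card ?R = card ?L" unfolding R by (rule card_image) (auto simp: inj_on_def)
  have cD: "card ?D = card K" by (rule card_image) (auto simp: inj_on_def)
  have "card (K \<times> K) = card (?L \<union> ?R) + card ?D"
    unfolding eq by (rule card_Un_disjoint) (use fL fR fD in auto)
  also have "card (?L \<union> ?R) = card ?L + card ?R"
    by (rule card_Un_disjoint) (use fL fR in auto)
  finally show ?thesis using cR cD by (simp add: card_cartesian_product power2_eq_square)
qed

lemma quad_bound:
  fixes a q :: real and k :: nat
  assumes "0 \<le> a" "a \<le> 1" "2 * q + real k = real k ^ 2"
  shows "a * real k - a^2 * q \<le> 1"
proof (cases "k \<le> 1")
  case True
  then have "k = 0 \<or> k = 1" by auto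
  then show ?thesis using assms by auto
next
  case False
  then have k2: "real k \<ge> 2" by simp
  have "q \<ge> real k ^ 2 / 4"
  proof -
    have "real k ^ 2 \<ge> 2 * real k" using k2 by (simp add: power2_eq_square)
    then show ?thesis using assms(3) by linarith
  qed
  then have "a^2 * q \<ge> a^2 * (real k ^ 2 / 4)" by (intro mult_left_mono) auto
  moreover have "(a * real k / 2 - 1)^2 \<ge> 0" by simp
  ultimately show ?thesis by (simp add: power2_eq_square algebra_simps)
qed


lemma sob: "finite A \<Longrightarrow> (\<Sum>p\<in>A. (of_bool (P p)::real)) = real (card (A \<inter> {p. P p}))" by simp

lemma Sv_bound:
  fixes n :: nat and E :: "nat \<Rightarrow> nat \<Rightarrow> bool" and X :: "nat \<Rightarrow> bool" and v :: nat
  assumes G: "simple_graph n E" and v: "v < n"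
  defines "I \<equiv> find_is n E X"
  defines "C \<equiv> I \<union> {v. v < n \<and> (\<exists>w\<in>I. E w v)}"
  shows "Sv n E v X \<le> of_bool (v \<in> C)"
proof -
  define N where "N = nbhd n E v"
  define K where "K = N \<inter> {w. X w}"
  define k where "k = card K"
  define q where "q = card {(w, w'). w \<in> K \<and> w' \<in> K \<and> w < w'}"
  define a where "a = acoef n E v"
  define T where "T = (\<Sum>w\<in>N. \<Sum>u\<in>{u. u < n \<and> E w u \<and> w < u}.
                          of_bool (X w) * (of_bool (X u) :: real))"
  have fN: "finite N" unfolding N_def nbhd_def by simp
  have fK: "finite K" unfolding K_def using fN by simp
  have s1: "(\<Sum>w\<in>N. (of_bool (X w) :: real)) = real k"
    using fN by (simp add: k_def K_def)
  have fP: "finite {(w, w'). w \<in> N \<and> w' \<in> N \<and> w < w'}"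
    by (rule finite_subset[of _ "N \<times> N"]) (use fN in auto)
  have PS: "(\<Sum>(w, w')\<in>{(w, w'). w \<in> N \<and> w' \<in> N \<and> w < w'}.
                          of_bool (X w) * (of_bool (X w') :: real)) = real q"
  proof -
    have "(\<Sum>(w, w')\<in>{(w, w'). w \<in> N \<and> w' \<in> N \<and> w < w'}.
                          of_bool (X w) * (of_bool (X w') :: real))
        = (\<Sum>p\<in>{(w, w'). w \<in> N \<and> w' \<in> N \<and> w < w'}. of_bool ((\<lambda>(w, w'). X w \<and> X w') p))"
      by (rule sum.cong) (auto simp: of_bool_conj)
    also have "\<dots> = real (card ({(w, w'). w \<in> N \<and> w' \<in> N \<and> w < w'} \<inter> {p. (\<lambda>(w, w'). X w \<and> X w') p}))"
      by (rule sob[OF fP])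
    also have "{(w, w'). w \<in> N \<and> w' \<in> N \<and> w < w'} \<inter> {p. (\<lambda>(w, w'). X w \<and> X w') p}
       = {(w, w'). w \<in> K \<and> w' \<in> K \<and> w < w'}" by (auto simp: K_def)
    finally show ?thesis by (simp add: q_def)
  qed
  have qk: "2 * real q + real k = real k ^ 2"
  proof -
    have "real (2 * q + k) = real (k ^ 2)" using pair_count[OF fK] unfolding q_def k_def by (simp only:)
    then show ?thesis by simp
  qed
  have T0: "T \<ge> 0" unfolding T_def by (intro sum_nonneg) auto
  have Gs: "Gsum n E v \<ge> 0" unfolding Gsum_def by (intro sum_nonneg) auto
  have a0: "0 \<le> a" unfolding a_def acoef_def using Gs by auto
  have a1: "a \<le> 1" unfolding a_def acoef_def by auto
  have Seq: "Sv n E v X = a * real k - a^2 * real q - a * T"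
    unfolding Sv_def a_def[symmetric] N_def[symmetric] T_def[symmetric] PS s1 by simp
  have Q: "a * real k - a^2 * real q \<le> 1" using quad_bound[OF a0 a1 qk] .
  show ?thesis
  proof (cases "v \<in> C")
    case True
    have "a * T \<ge> 0" using a0 T0 by simp
    then show ?thesis using True Seq Q by simp
  next
    case False
    have "(\<Sum>w\<in>N. (of_bool (X w) :: real)) \<le> T"
      unfolding T_def
    proof (rule sum_mono)
      fix w assume wN: "w \<in> N"
      show "(of_bool (X w) :: real) \<le> (\<Sum>u\<in>{u. u < n \<and> E w u \<and> w < u}.
                          of_bool (X w) * (of_bool (X u) :: real))"
      proof (cases "X w")
        case False then show ?thesis by simp
      next
        case True
        have Evw: "E v w" "w < n" using wN unfolding N_def nbhd_def by auto
        have Ewv: "E w v" using G Evw unfolding simple_graph_def by blast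
        have "w \<notin> I"
        proof
          assume "w \<in> I"
          then have "v \<in> C" unfolding C_def using Ewv v by auto
          then show False using False by simp
        qed
        then obtain u where u: "E w u" "w < u" "X u"
          using True Evw unfolding I_def find_is_def by auto
        have un: "u < n" using G u unfolding simple_graph_def by blast
        have "(of_bool (X w) :: real) = of_bool (X w) * of_bool (X u)" using True u by simp
        also have "\<dots> \<le> (\<Sum>u\<in>{u. u < n \<and> E w u \<and> w < u}. of_bool (X w) * (of_bool (X u) :: real))"
          by (rule member_le_sum) (use u un in auto)
        finally show ?thesis .
      qed
    qed
    then have "real k \<le> T" using s1 by simp
    then have "a * real k \<le> a * T" using a0 by (rule mult_left_mono)
    moreover have "a^2 * real q \<ge> 0" by simp
    ultimately have "Sv n E v X \<le> 0" using Seq by linarith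
    then show ?thesis using False by simp
  qed
qed

theorem proposition3p1:
  fixes n :: nat and E :: "nat \<Rightarrow> nat \<Rightarrow> bool" and X :: "nat \<Rightarrow> bool"
  assumes "simple_graph n E"
    and "\<And>u v. u < v \<Longrightarrow> v < n \<Longrightarrow> deg n E u \<le> deg n E v"
  shows "real (H n E (find_is n E X)) \<ge> Stot n E X / 2"
proof -
  note G = assms(1)
  define I where "I = find_is n E X"
  define C where "C = I \<union> {v. v < n \<and> (\<exists>w\<in>I. E w v)}"
  define Ed where "Ed = {(u, v). u < v \<and> v < n \<and> E u v \<and> (u \<in> C \<or> v \<in> C)}"
  define A where "A = {v. v < n \<and> v \<in> C}"
  define P where "P = (SIGMA v:A. nbhd n E v)"
  have HE: "H n E I = card Ed" unfolding H_def Ed_def C_def Let_def by simp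
  have fA: "finite A" unfolding A_def by simp
  have fEd: "finite Ed" by (rule finite_subset[of _ "{..<n} \<times> {..<n}"]) (auto simp: Ed_def)
  have "Stot n E X \<le> (\<Sum>v<n. real (deg n E v) * of_bool (v \<in> C))"
    unfolding Stot_def
  proof (rule sum_mono)
    fix v assume "v \<in> {..<n}"
    then have "Sv n E v X \<le> of_bool (v \<in> C)"
      using Sv_bound[OF G, of v X] unfolding C_def I_def by simp
    then show "real (deg n E v) * Sv n E v X \<le> real (deg n E v) * of_bool (v \<in> C)"
      by (rule mult_left_mono) simp
  qed
  also have "(\<Sum>v<n. real (deg n E v) * of_bool (v \<in> C)) = (\<Sum>v\<in>A. real (deg n E v))"
    unfolding A_def by (rule sum.mono_neutral_cong_right) auto
  also have "\<dots> = real (card P)"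
  proof -
    have "card P = (\<Sum>v\<in>A. card (nbhd n E v))"
      unfolding P_def by (rule card_SigmaI) (use fA in \<open>auto simp: nbhd_def\<close>)
    then show ?thesis by (simp add: deg_def)
  qed
  also have "card P \<le> 2 * card Ed"
  proof -
    have "P \<subseteq> Ed \<union> (\<lambda>(a, b). (b, a)) ` Ed"
    proof
      fix p assume "p \<in> P"
      then obtain v w where p: "p = (v, w)" "v < n" "v \<in> C" "E v w" "w < n"
        unfolding P_def A_def nbhd_def by auto
      have "v \<noteq> w" "E w v" using G p unfolding simple_graph_def by blast+
      show "p \<in> Ed \<union> (\<lambda>(a, b). (b, a)) ` Ed"
      proof (cases "v < w")
        case True then show ?thesis using p unfolding Ed_def by auto
      next
        case False
        then have "w < v" using \<open>v \<noteq> w\<close> by simp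
        then have "(w, v) \<in> Ed" using p \<open>E w v\<close> unfolding Ed_def by auto
        then show ?thesis using p by force
      qed
    qed
    then have "card P \<le> card (Ed \<union> (\<lambda>(a, b). (b, a)) ` Ed)"
      by (rule card_mono[rotated]) (use fEd in simp)
    also have "\<dots> \<le> card Ed + card ((\<lambda>(a, b). (b, a)) ` Ed)" by (rule card_Un_le)
    also have "card ((\<lambda>(a, b). (b, a)) ` Ed) \<le> card Ed" by (rule card_image_le[OF fEd])
    finally show ?thesis by simp
  qed
  then have "real (card P) \<le> 2 * real (H n E I)" unfolding HE by simp
  finally show ?thesis unfolding I_def by simp
qed

end
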